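(* Let $N_1\ge\cdots\ge N_C\ge1$ be class sizes with $N=\sum_y N_y$ and $\pi_y=N_y/N$. Suppose the local Lipschitz constants satisfy $\mu_y=c\,N_y^{-\kappa}$ for a constant $c>0$ and $\kappa>1$, let $\mu=\max_y\mu_y$ be the corresponding global Lipschitz constant, and suppose the empirical complexities scale as $\hat{\mathfrak{C}}_{\mathcal{S}}(\mathcal{F})=K/\sqrt{N}$ and $\hat{\mathfrak{C}}_{\mathcal{S}_y}(\mathcal{F})=K/\sqrt{N_y}$ for a constant $K>0$. Then the complexity term of the data-dependent bound is no larger than that of the union bound: $$\frac{\hat{\mathfrak{C}}_{\mathcal{S}}(\mathcal{F})}{C\pi_C}\sum_{y=1}^C\mu_y\sqrt{\pi_y}\;\le\;\frac{\mu}{C}\sum_{y=1}^C\hat{\mathfrak{C}}_{\mathcal{S}_y}(\mathcal{F}).$$ That is, the data-dependent bound (with complexity term on the left) is sharper than the union bound (with complexity term on the right).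
   Context: Context: two generalization bounds for the balanced risk in imbalanced classification with $C$ classes are compared. The union bound has complexity term $\frac{\mu}{C}\sum_y\hat{\mathfrak{C}}_{\mathcal{S}_y}(\mathcal{F})$, obtained by bounding each class separately with a loss that is Lipschitz with global constant $\mu$; the data-dependent bound has complexity term $\frac{\hat{\mathfrak{C}}_{\mathcal{S}}(\mathcal{F})}{C\pi_C}\sum_y\mu_y\sqrt{\pi_y}$, where $\mu_y$ are local Lipschitz constants: $|L(f(\boldsymbol{x}),y)-L(f'(\boldsymbol{x}),y)|\le\mu_y\|f(\boldsymbol{x})-f'(\boldsymbol{x})\|_2$ for all $\boldsymbol{x}\in\mathcal{S}_y$. Here $\hat{\mathfrak{C}}_{\mathcal{S}}(\mathcal{F})$ denotes the empirical (Rademacher-type) complexity of the score-function class $\mathcal{F}$ on the whole training set $\mathcal{S}$ and $\hat{\mathfrak{C}}_{\mathcal{S}_y}(\mathcal{F})$ that on the class-$y$ subsample $\mathcal{S}_y$ of size $N_y$. *)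

theory Defs
  imports "HOL-Analysis.Analysis"
begin

end

theory Submission
  imports Defs
begin

lemma key_ineq:
  fixes m n k :: real
  assumes m: "m > 0" and mn: "m \<le> n" and k: "k > 1"
  shows "n powr (-k) * sqrt n / m \<le> m powr (-k) / sqrt n"
proof -
  have n: "n > 0" using m mn by linarith
  have "n powr (1 - k) \<le> m powr (1 - k)"
    by (rule powr_mono2') (use k m mn in auto)
  hence "n powr (-k) * n \<le> m powr (-k) * m"
    using m n by (simp add: powr_diff powr_minus_divide)
  moreover have "n powr (-k) * sqrt n / m = (n powr (-k) * n) / (m * sqrt n)"
    using n m by (simp add: field_simps)
  moreover have "m powr (-k) / sqrt n = (m powr (-k) * m) / (m * sqrt n)"
    using n m by (simp add: field_simps)
  moreover have "(n powr (-k) * n) / (m * sqrt n) \<le> (m powr (-k) * m) / (m * sqrt n)"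
    by (rule divide_right_mono) (use calculation m n in auto)
  ultimately show ?thesis by simp
qed

theorem proposition2:
  fixes C :: nat and Ncl :: "nat \<Rightarrow> nat"
    and c \<kappa> K :: real
    and \<mu>y :: "nat \<Rightarrow> real" and \<mu> :: real
    and compS :: real and compSy :: "nat \<Rightarrow> real"
  assumes C_pos: "C \<ge> 1"
    and sizes_pos: "\<And>y. y \<in> {1..C} \<Longrightarrow> Ncl y \<ge> 1"
    and sizes_sorted: "\<And>y y'. y \<in> {1..C} \<Longrightarrow> y' \<in> {1..C} \<Longrightarrow> y \<le> y' \<Longrightarrow> Ncl y' \<le> Ncl y"
    and c_pos: "c > 0" and kappa_gt: "\<kappa> > 1" and K_pos: "K > 0"
    and mu_local: "\<And>y. y \<in> {1..C} \<Longrightarrow> \<mu>y y = c * real (Ncl y) powr (-\<kappa>)"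
    and mu_global: "\<mu> = Max (\<mu>y ` {1..C})"
    and compS_def: "compS = K / sqrt (real (\<Sum>y\<in>{1..C}. Ncl y))"
    and compSy_def: "\<And>y. y \<in> {1..C} \<Longrightarrow> compSy y = K / sqrt (real (Ncl y))"
  shows "(let N = real (\<Sum>y\<in>{1..C}. Ncl y); \<pi> = (\<lambda>y. real (Ncl y) / N) in
           compS / (real C * \<pi> C) * (\<Sum>y\<in>{1..C}. \<mu>y y * sqrt (\<pi> y)))
         \<le> \<mu> / real C * (\<Sum>y\<in>{1..C}. compSy y)"
proof -
  define N where "N = real (\<Sum>y\<in>{1..C}. Ncl y)"
  define m where "m = real (Ncl C)"
  have CC: "C \<in> {1..C}" using C_pos by auto
  have m_pos: "m > 0" using sizes_pos[OF CC] unfolding m_def by simp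
  have "Ncl C \<le> (\<Sum>y\<in>{1..C}. Ncl y)"
    by (rule member_le_sum) (use CC in auto)
  hence N_pos: "N > 0" using m_pos unfolding N_def m_def by linarith
  have mu_ge: "\<mu> \<ge> c * m powr (-\<kappa>)"
    unfolding mu_global m_def using mu_local[OF CC] CC by (metis Max_ge finite_atLeastAtMost finite_imageI imageI)
  have Cp: "real C > 0" using C_pos by simp
  have termle: "compS / (real C * (m / N)) * (\<mu>y y * sqrt (real (Ncl y) / N)) \<le> \<mu> / real C * compSy y"
    if y: "y \<in> {1..C}" for y
  proof -
    define n where "n = real (Ncl y)"
    have n_pos: "n > 0" using sizes_pos[OF y] unfolding n_def by simp
    have mn: "m \<le> n" unfolding m_def n_def using sizes_sorted[OF y CC] y by auto
    have "compS / (real C * (m / N)) * (\<mu>y y * sqrt (n / N))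
        = K * c / real C * (n powr (-\<kappa>) * sqrt n / m)"
    proof -
      have sN: "sqrt N * sqrt N = N" using N_pos by simp
      have sNp: "sqrt N > 0" using N_pos by simp
      have cN: "compS = K / sqrt N" by (simp add: compS_def N_def)
      show ?thesis
        using N_pos m_pos n_pos Cp sNp
        by (simp add: cN mu_local[OF y] n_def[symmetric] real_sqrt_divide field_simps sN)
    qed
    also have "\<dots> \<le> K * c / real C * (m powr (-\<kappa>) / sqrt n)"
      by (rule mult_left_mono[OF key_ineq[OF m_pos mn kappa_gt]]) (use K_pos c_pos Cp in simp)
    also have "\<dots> = (c * m powr (-\<kappa>)) / real C * (K / sqrt n)"
      by simp
    also have "\<dots> \<le> \<mu> / real C * (K / sqrt n)"
      by (rule mult_right_mono[OF divide_right_mono[OF mu_ge]]) (use K_pos Cp n_pos in auto)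
    finally show ?thesis unfolding n_def compSy_def[OF y] .
  qed
  have "compS / (real C * (m / N)) * (\<Sum>y\<in>{1..C}. \<mu>y y * sqrt (real (Ncl y) / N))
      = (\<Sum>y\<in>{1..C}. compS / (real C * (m / N)) * (\<mu>y y * sqrt (real (Ncl y) / N)))"
    by (simp add: sum_distrib_left)
  also have "\<dots> \<le> (\<Sum>y\<in>{1..C}. \<mu> / real C * compSy y)"
    by (rule sum_mono) (rule termle)
  also have "\<dots> = \<mu> / real C * (\<Sum>y\<in>{1..C}. compSy y)"
    by (simp add: sum_distrib_left)
  finally show ?thesis unfolding Let_def N_def[symmetric] m_def .
qed

end
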